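(* Let $(G,\sigma)$ be a finite connected signed graph satisfying $CD^{\sigma}(0,N)$ for some $N\in(1,\infty]$. Then every nonzero eigenvalue $\lambda^{\sigma}$ of $\Delta^{\sigma}$ satisfies \[ \lambda^\sigma\geq \frac{1}{4\left(1+\sqrt{(N-1)/N}\right)}\cdot\frac{1}{d(D+1)\lceil (D+1)/2\rceil}, \] where $d$ is the maximal vertex degree and $D$ the diameter of $G$, and $\sqrt{(N-1)/N}:=1$ when $N=\infty$.
   Context: $G=(V,E)$ is a finite simple connected graph with degrees $d_x$; $\sigma:E\to\{\pm1\}$, $\sigma_{xy}=\sigma(\{x,y\})$. Signed Laplacian $\Delta^{\sigma}f(x)=\frac{1}{d_x}\sum_{y\sim x}(\sigma_{xy}f(y)-f(x))$; $\Delta$ is the case $\sigma\equiv+1$; eigenvalues: $-\Delta^\sigma f=\lambda f$, $f\ne0$. $\Gamma^{\sigma}(f,g)=\frac12\{\Delta(fg)-g\Delta^{\sigma}f-f\Delta^{\sigma}g\}$, $\Gamma_2^{\sigma}(f,g)=\frac12\{\Delta\Gamma^{\sigma}(f,g)-\Gamma^{\sigma}(g,\Delta^{\sigma}f)-\Gamma^{\sigma}(f,\Delta^{\sigma}g)\}$. $CD^{\sigma}(K,N)$ means $\Gamma_2^{\sigma}(f,f)(x)\ge\frac1N(\Delta^\sigma f)^2(x)+K\Gamma^\sigma(f,f)(x)$ for all $f:V\to\mathbb{R}$, $x\in V$ ($\frac1N=0$ if $N=\infty$). $\lceil\cdot\rceil$ is the ceiling. *)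

theory Defs
  imports Complex_Main "HOL-Library.Extended_Real"
begin

definition simple_graph :: "'a set \<Rightarrow> ('a \<Rightarrow> 'a \<Rightarrow> bool) \<Rightarrow> bool" where
  "simple_graph V E \<longleftrightarrow> finite V \<and> (\<forall>x y. E x y \<longrightarrow> x \<in> V \<and> y \<in> V)
     \<and> (\<forall>x y. E x y \<longrightarrow> E y x) \<and> (\<forall>x. \<not> E x x)"

definition nbrs :: "'a set \<Rightarrow> ('a \<Rightarrow> 'a \<Rightarrow> bool) \<Rightarrow> 'a \<Rightarrow> 'a set" where
  "nbrs V E x = {y \<in> V. E x y}"

definition deg :: "'a set \<Rightarrow> ('a \<Rightarrow> 'a \<Rightarrow> bool) \<Rightarrow> 'a \<Rightarrow> nat" where
  "deg V E x = card (nbrs V E x)"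

definition max_deg :: "'a set \<Rightarrow> ('a \<Rightarrow> 'a \<Rightarrow> bool) \<Rightarrow> nat" where
  "max_deg V E = Max (deg V E ` V)"

fun walk :: "('a \<Rightarrow> 'a \<Rightarrow> bool) \<Rightarrow> 'a list \<Rightarrow> bool" where
  "walk E [] = False"
| "walk E [x] = True"
| "walk E (x # y # xs) = (E x y \<and> walk E (y # xs))"

definition connected_graph :: "'a set \<Rightarrow> ('a \<Rightarrow> 'a \<Rightarrow> bool) \<Rightarrow> bool" where
  "connected_graph V E \<longleftrightarrow>
     (\<forall>x\<in>V. \<forall>y\<in>V. \<exists>p. walk E p \<and> hd p = x \<and> last p = y)"

definition gdist :: "('a \<Rightarrow> 'a \<Rightarrow> bool) \<Rightarrow> 'a \<Rightarrow> 'a \<Rightarrow> nat" where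
  "gdist E x y = (LEAST n. \<exists>p. walk E p \<and> hd p = x \<and> last p = y \<and> length p = Suc n)"

definition diameter :: "'a set \<Rightarrow> ('a \<Rightarrow> 'a \<Rightarrow> bool) \<Rightarrow> nat" where
  "diameter V E = Max {gdist E x y | x y. x \<in> V \<and> y \<in> V}"

definition signature :: "('a \<Rightarrow> 'a \<Rightarrow> bool) \<Rightarrow> ('a \<Rightarrow> 'a \<Rightarrow> real) \<Rightarrow> bool" where
  "signature E \<sigma> \<longleftrightarrow> (\<forall>x y. E x y \<longrightarrow> \<sigma> x y = \<sigma> y x \<and> (\<sigma> x y = 1 \<or> \<sigma> x y = -1))"

definition sLap :: "'a set \<Rightarrow> ('a \<Rightarrow> 'a \<Rightarrow> bool) \<Rightarrow> ('a \<Rightarrow> 'a \<Rightarrow> real) \<Rightarrow> ('a \<Rightarrow> real) \<Rightarrow> 'a \<Rightarrow> real" where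
  "sLap V E \<sigma> f x = (1 / real (deg V E x)) * (\<Sum>y\<in>nbrs V E x. \<sigma> x y * f y - f x)"

definition Lap :: "'a set \<Rightarrow> ('a \<Rightarrow> 'a \<Rightarrow> bool) \<Rightarrow> ('a \<Rightarrow> real) \<Rightarrow> 'a \<Rightarrow> real" where
  "Lap V E = sLap V E (\<lambda>_ _. 1)"

definition sGamma :: "'a set \<Rightarrow> ('a \<Rightarrow> 'a \<Rightarrow> bool) \<Rightarrow> ('a \<Rightarrow> 'a \<Rightarrow> real) \<Rightarrow> ('a \<Rightarrow> real) \<Rightarrow> ('a \<Rightarrow> real) \<Rightarrow> 'a \<Rightarrow> real" where
  "sGamma V E \<sigma> f g x = (1/2) * (Lap V E (\<lambda>z. f z * g z) x
      - g x * sLap V E \<sigma> f x - f x * sLap V E \<sigma> g x)"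

definition sGamma2 :: "'a set \<Rightarrow> ('a \<Rightarrow> 'a \<Rightarrow> bool) \<Rightarrow> ('a \<Rightarrow> 'a \<Rightarrow> real) \<Rightarrow> ('a \<Rightarrow> real) \<Rightarrow> ('a \<Rightarrow> real) \<Rightarrow> 'a \<Rightarrow> real" where
  "sGamma2 V E \<sigma> f g x = (1/2) * (Lap V E (sGamma V E \<sigma> f g) x
      - sGamma V E \<sigma> g (sLap V E \<sigma> f) x - sGamma V E \<sigma> f (sLap V E \<sigma> g) x)"

definition invN :: "ereal \<Rightarrow> real" where
  "invN N = (if N = \<infinity> then 0 else 1 / real_of_ereal N)"

definition CD :: "'a set \<Rightarrow> ('a \<Rightarrow> 'a \<Rightarrow> bool) \<Rightarrow> ('a \<Rightarrow> 'a \<Rightarrow> real) \<Rightarrow> real \<Rightarrow> ereal \<Rightarrow> bool" where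
  "CD V E \<sigma> K N \<longleftrightarrow> (\<forall>f. \<forall>x\<in>V.
      sGamma2 V E \<sigma> f f x \<ge> invN N * (sLap V E \<sigma> f x)^2 + K * sGamma V E \<sigma> f f x)"

definition sqrtN :: "ereal \<Rightarrow> real" where
  "sqrtN N = (if N = \<infinity> then 1 else sqrt ((real_of_ereal N - 1) / real_of_ereal N))"

definition eigenvalue :: "'a set \<Rightarrow> ('a \<Rightarrow> 'a \<Rightarrow> bool) \<Rightarrow> ('a \<Rightarrow> 'a \<Rightarrow> real) \<Rightarrow> real \<Rightarrow> bool" where
  "eigenvalue V E \<sigma> lam \<longleftrightarrow> (\<exists>f. (\<exists>x\<in>V. f x \<noteq> 0) \<and> (\<forall>x\<in>V. - sLap V E \<sigma> f x = lam * f x))"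

end

theory Submission
  imports Defs
begin


fun wsign :: "('a \<Rightarrow> 'a \<Rightarrow> real) \<Rightarrow> 'a list \<Rightarrow> real" where
  "wsign s (x # y # xs) = s x y * wsign s (y # xs)"
| "wsign s _ = 1"

fun nobt :: "'a list \<Rightarrow> bool" where
  "nobt (x # y # z # xs) = (x \<noteq> z \<and> nobt (y # z # xs))"
| "nobt _ = True"

fun twostep :: "'a list \<Rightarrow> bool" where
  "twostep (x # y # z # xs) = twostep (z # xs)"
| "twostep _ = True"

lemma walk_nonempty: "walk E p \<Longrightarrow> p \<noteq> []"
  by (cases p) auto

lemma walk_Cons: "q \<noteq> [] \<Longrightarrow> walk E (x # q) \<longleftrightarrow> E x (hd q) \<and> walk E q"
  by (cases q) auto

lemma wsign_Cons: "q \<noteq> [] \<Longrightarrow> wsign s (x # q) = s x (hd q) * wsign s q"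
  by (cases q) auto

lemma nobt_tl: "nobt (x # l) \<Longrightarrow> nobt l"
  by (induction l rule: nobt.induct) auto

lemma shorten: "walk E p \<Longrightarrow> \<not> nobt p \<Longrightarrow>
   \<exists>q. walk E q \<and> hd q = hd p \<and> last q = last p \<and> length q < length p"
proof (induction p rule: nobt.induct)
  case (1 x y z xs)
  show ?case
  proof (cases "x = z")
    case True
    have "walk E (z # xs)" using 1(2) by simp
    then show ?thesis using True by (intro exI[of _ "z # xs"]) simp
  next
    case False
    then have a: "\<not> nobt (y # z # xs)" using 1(3) by simp
    have b: "walk E (y # z # xs)" using 1(2) by simp
    obtain q where q: "walk E q" "hd q = y" "last q = last (y # z # xs)"
      "length q < length (y # z # xs)" using 1(1)[OF b a] by auto
    have qn: "q \<noteq> []" using q(1) walk_nonempty by blast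
    have exy: "E x y" using 1(2) by simp
    have w: "walk E (x # q)" unfolding walk_Cons[OF qn] using q(1,2) exy by simp
    have l: "last (x # q) = last (x # y # z # xs)" using q(3) qn by simp
    have "length (x # q) < length (x # y # z # xs)" using q(4) by simp
    then show ?thesis using w l by (intro exI[of _ "x # q"]) simp
  qed
qed simp_all

lemma gdist_le: "walk E q \<Longrightarrow> hd q = a \<Longrightarrow> last q = b \<Longrightarrow> gdist E a b \<le> length q - 1"
proof -
  assume a: "walk E q" "hd q = a" "last q = b"
  then have "q \<noteq> []" using walk_nonempty by blast
  then have "length q = Suc (length q - 1)" by (cases q) auto
  then show ?thesis unfolding gdist_def using a by (intro Least_le) blast
qed

lemma gdist_ex: "connected_graph V E \<Longrightarrow> a \<in> V \<Longrightarrow> b \<in> V \<Longrightarrow>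
   \<exists>q. walk E q \<and> hd q = a \<and> last q = b \<and> length q = Suc (gdist E a b)"
proof -
  assume c: "connected_graph V E" "a \<in> V" "b \<in> V"
  then obtain p where p: "walk E p" "hd p = a" "last p = b" unfolding connected_graph_def by blast
  then have "length p = Suc (length p - 1)" using walk_nonempty by (cases p) auto
  then have ex: "\<exists>n. \<exists>p. walk E p \<and> hd p = a \<and> last p = b \<and> length p = Suc n" using p by blast
  show ?thesis unfolding gdist_def by (rule LeastI_ex[OF ex])
qed

lemma diam_ge: "finite V \<Longrightarrow> a \<in> V \<Longrightarrow> b \<in> V \<Longrightarrow> gdist E a b \<le> diameter V E"
proof -
  assume f: "finite V" "a \<in> V" "b \<in> V"
  have "{gdist E x y | x y. x \<in> V \<and> y \<in> V} = (\<lambda>(x,y). gdist E x y) ` (V \<times> V)" by auto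
  then have "finite {gdist E x y | x y. x \<in> V \<and> y \<in> V}" using f by simp
  then show ?thesis unfolding diameter_def using f by (intro Max_ge) auto
qed

context
  fixes V :: "'a set" and E :: "'a \<Rightarrow> 'a \<Rightarrow> bool" and \<sigma> :: "'a \<Rightarrow> 'a \<Rightarrow> real"
  assumes G: "simple_graph V E" and S: "signature E \<sigma>"
begin

lemma finV: "finite V" using G by (simp add: simple_graph_def)
lemma EV: "E x y \<Longrightarrow> x \<in> V \<and> y \<in> V" using G by (simp add: simple_graph_def)
lemma Esym: "E x y \<Longrightarrow> E y x" using G by (simp add: simple_graph_def)
lemma fin_nbrs: "finite (nbrs V E x)" using finV by (simp add: nbrs_def)
lemma nbrs_sub: "nbrs V E x \<subseteq> V" by (auto simp: nbrs_def)
lemma in_nbrs: "y \<in> nbrs V E x \<longleftrightarrow> E x y" using EV by (auto simp: nbrs_def)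
lemma sig_pm: "E x y \<Longrightarrow> \<sigma> x y = 1 \<or> \<sigma> x y = -1" using S by (simp add: signature_def)
lemma sig_sym: "E x y \<Longrightarrow> \<sigma> y x = \<sigma> x y" using S unfolding signature_def by metis
lemma sig_sq: "E x y \<Longrightarrow> \<sigma> x y * \<sigma> x y = 1" using sig_pm by fastforce

lemma walk_set: "walk E p \<Longrightarrow> hd p \<in> V \<Longrightarrow> set p \<subseteq> V"
proof (induction p)
  case (Cons x xs) then show ?case by (cases xs) (auto dest: EV)
qed simp

lemma wsign_pm: "walk E p \<Longrightarrow> wsign \<sigma> p = 1 \<or> wsign \<sigma> p = -1"
proof (induction p)
  case (Cons x xs) then show ?case by (cases xs) (auto dest: sig_pm)
qed simp

lemma aux_alg: "(1/2::real) * (a * S1 - gx * (a * S2) - fx * (a * S3)) = 1/2 * a * (S1 - gx * S2 - fx * S3)"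
  by (simp add: algebra_simps)

lemma gamma_formula: "sGamma V E \<sigma> f g x = (1 / 2) * (1 / real (deg V E x)) *
   (\<Sum>y\<in>nbrs V E x. (\<sigma> x y * f y - f x) * (\<sigma> x y * g y - g x))"
proof -
  have "(\<Sum>y\<in>nbrs V E x. (\<sigma> x y * f y - f x) * (\<sigma> x y * g y - g x)) =
     (\<Sum>y\<in>nbrs V E x. (1 * (f y * g y) - f x * g x) - g x * (\<sigma> x y * f y - f x) - f x * (\<sigma> x y * g y - g x))"
  proof (rule sum.cong)
    fix y assume "y \<in> nbrs V E x"
    then have "\<sigma> x y * \<sigma> x y = 1" using sig_sq in_nbrs by blast
    then show "(\<sigma> x y * f y - f x) * (\<sigma> x y * g y - g x) =
       (1 * (f y * g y) - f x * g x) - g x * (\<sigma> x y * f y - f x) - f x * (\<sigma> x y * g y - g x)"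
      by (simp add: algebra_simps)
  qed simp
  also have "\<dots> = (\<Sum>y\<in>nbrs V E x. 1 * (f y * g y) - f x * g x) - g x * (\<Sum>y\<in>nbrs V E x. \<sigma> x y * f y - f x)
      - f x * (\<Sum>y\<in>nbrs V E x. \<sigma> x y * g y - g x)"
    by (simp add: sum_subtractf sum_distrib_left right_diff_distrib)
  finally have eq: "(\<Sum>y\<in>nbrs V E x. (\<sigma> x y * f y - f x) * (\<sigma> x y * g y - g x)) =
     (\<Sum>y\<in>nbrs V E x. 1 * (f y * g y) - f x * g x) - g x * (\<Sum>y\<in>nbrs V E x. \<sigma> x y * f y - f x)
      - f x * (\<Sum>y\<in>nbrs V E x. \<sigma> x y * g y - g x)" .
  have "sGamma V E \<sigma> f g x = 1/2 * ((1 / real (deg V E x)) * (\<Sum>y\<in>nbrs V E x. 1 * (f y * g y) - f x * g x)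
     - g x * ((1 / real (deg V E x)) * (\<Sum>y\<in>nbrs V E x. \<sigma> x y * f y - f x))
     - f x * ((1 / real (deg V E x)) * (\<Sum>y\<in>nbrs V E x. \<sigma> x y * g y - g x)))"
    by (simp only: sGamma_def Lap_def sLap_def)
  then show ?thesis unfolding eq aux_alg .
qed

lemma sum_sq: "(\<Sum>y\<in>nbrs V E x. (\<sigma> x y * f y - f x)^2) = 2 * real (deg V E x) * sGamma V E \<sigma> f f x"
proof (cases "deg V E x = 0")
  case True
  then have "nbrs V E x = {}" using fin_nbrs unfolding deg_def by simp
  then show ?thesis using True by simp
next
  case False
  then show ?thesis by (simp add: gamma_formula power2_eq_square)
qed

lemma gamma_nonneg: "0 \<le> sGamma V E \<sigma> f f x"
proof -
  have "0 \<le> (\<Sum>y\<in>nbrs V E x. (\<sigma> x y * f y - f x) * (\<sigma> x y * f y - f x))"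
    by (rule sum_nonneg) simp
  then show ?thesis unfolding gamma_formula by simp
qed

lemma lap_max: "\<forall>y\<in>V. F y \<le> F x \<Longrightarrow> Lap V E F x \<le> 0"
  unfolding Lap_def sLap_def
  by (intro mult_nonneg_nonpos sum_nonpos) (use nbrs_sub in auto)

lemma lap_min: "\<forall>y\<in>V. F x \<le> F y \<Longrightarrow> Lap V E F x \<ge> 0"
  unfolding Lap_def sLap_def
  by (intro mult_nonneg_nonneg sum_nonneg) (use nbrs_sub in auto)

lemma lap_add: "Lap V E (\<lambda>z. F z + c * H z) x = Lap V E F x + c * Lap V E H x"
proof -
  have "(\<Sum>y\<in>nbrs V E x. 1 * (F y + c * H y) - (F x + c * H x)) =
      (\<Sum>y\<in>nbrs V E x. 1 * F y - F x) + c * (\<Sum>y\<in>nbrs V E x. 1 * H y - H x)"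
    by (simp add: sum.distrib[symmetric] sum_distrib_left algebra_simps)
  then show ?thesis unfolding Lap_def sLap_def by (simp add: algebra_simps)
qed

end


lemma sqrtN_facts: "1 < N \<Longrightarrow> 0 < sqrtN N \<and> invN N = 1 - (sqrtN N)^2"
proof (cases N)
  case (real r)
  assume "1 < N"
  then have r: "1 < r" using real by simp
  then have p: "0 < (r - 1) / r" by simp
  have "(sqrtN N)^2 = (r - 1) / r" using real p by (simp add: sqrtN_def)
  moreover have "invN N = 1 / r" using real by (simp add: invN_def)
  moreover have "1 / r = 1 - (r - 1) / r" using r by (simp add: field_simps)
  ultimately show ?thesis using real p by (simp add: sqrtN_def)
qed (auto simp: sqrtN_def invN_def)

lemma key_ineq:
  fixes a g q L s :: real
  assumes A: "a + (1 + s) * L * (2 * g - 2 * L * q) \<le> 0"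
    and B: "(1 - s^2) * (L^2 * q) \<le> 1/2 * a + L * g"
  shows "(s * L) * g \<le> (s * L) * ((1 + s) * L * q)"
proof -
  have "(s * L) * ((1 + s) * L * q) - (s * L) * g =
     (- (a + (1 + s) * L * (2 * g - 2 * L * q))) / 2 + (1/2 * a + L * g - (1 - s^2) * (L^2 * q))"
    by algebra
  moreover have "0 \<le> (- (a + (1 + s) * L * (2 * g - 2 * L * q))) / 2 + (1/2 * a + L * g - (1 - s^2) * (L^2 * q))"
    using A B by (intro add_nonneg_nonneg divide_nonneg_nonneg) auto
  ultimately show ?thesis by linarith
qed

lemma lff_aux:
  fixes G Lff fx L :: real
  assumes "G = 1/2 * (Lff - fx * (- L * fx) - fx * (- L * fx))"
  shows "Lff = 2 * G - 2 * L * (fx * fx)"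
  using assms by (simp add: algebra_simps)

lemma cd_aux:
  fixes i s L fx g2 :: real
  assumes "i * (- L * fx)^2 \<le> g2" "i = 1 - s^2"
  shows "(1 - s^2) * (L^2 * (fx * fx)) \<le> g2"
  using assms by (simp add: power2_eq_square algebra_simps)

context
  fixes V :: "'a set" and E :: "'a \<Rightarrow> 'a \<Rightarrow> bool" and \<sigma> :: "'a \<Rightarrow> 'a \<Rightarrow> real"
  assumes G: "simple_graph V E" and S: "signature E \<sigma>"
begin

lemma gamma_lap:
  assumes eig: "\<forall>x\<in>V. - sLap V E \<sigma> f x = lam * f x" and x: "x \<in> V"
  shows "sGamma V E \<sigma> f (sLap V E \<sigma> f) x = - lam * sGamma V E \<sigma> f f x"
proof -
  have "(\<Sum>y\<in>nbrs V E x. (\<sigma> x y * f y - f x) * (\<sigma> x y * sLap V E \<sigma> f y - sLap V E \<sigma> f x)) =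
     (\<Sum>y\<in>nbrs V E x. - lam * ((\<sigma> x y * f y - f x) * (\<sigma> x y * f y - f x)))"
  proof (rule sum.cong)
    fix y assume "y \<in> nbrs V E x"
    then have "y \<in> V" using nbrs_sub[OF G S] by blast
    then have "sLap V E \<sigma> f y = - lam * f y" "sLap V E \<sigma> f x = - lam * f x" using eig x by force+
    then show "(\<sigma> x y * f y - f x) * (\<sigma> x y * sLap V E \<sigma> f y - sLap V E \<sigma> f x) =
     - lam * ((\<sigma> x y * f y - f x) * (\<sigma> x y * f y - f x))" by (simp add: algebra_simps)
  qed simp
  also have "\<dots> = (- lam) * (\<Sum>y\<in>nbrs V E x. (\<sigma> x y * f y - f x) * (\<sigma> x y * f y - f x))"
    by (rule sum_distrib_left[symmetric])
  finally show ?thesis unfolding gamma_formula[OF G S] by simp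
qed

lemma grad_bound:
  assumes CD: "CD V E \<sigma> 0 N" and N: "1 < N"
    and eig: "\<forall>x\<in>V. - sLap V E \<sigma> f x = lam * f x" and lam: "lam > 0"
    and Mb: "\<forall>y\<in>V. \<bar>f y\<bar> \<le> M" and y: "y \<in> V"
  shows "sGamma V E \<sigma> f f y \<le> 2 * (1 + sqrtN N) * lam * M^2"
proof -
  define s where "s = sqrtN N"
  have s: "0 < s" "invN N = 1 - s^2" using sqrtN_facts[OF N] s_def by auto
  define Gm where "Gm = sGamma V E \<sigma> f f"
  define F where "F = (\<lambda>z. Gm z + ((1 + s) * lam) * (f z * f z))"
  have fin: "finite (F ` V)" using finV[OF G S] by simp
  have ne: "F ` V \<noteq> {}" using y by blast
  obtain x where x: "x \<in> V" "F x = Max (F ` V)" using Max_in[OF fin ne] by auto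
  have xmax: "\<forall>z\<in>V. F z \<le> F x" using x Max_ge[OF fin] by simp
  have sl: "sLap V E \<sigma> f x = - lam * f x" using eig x by force
  have g2: "sGamma2 V E \<sigma> f f x = 1/2 * Lap V E Gm x + lam * Gm x"
    unfolding sGamma2_def gamma_lap[OF eig x(1)] Gm_def by (simp add: algebra_simps)
  have cd: "invN N * (sLap V E \<sigma> f x)^2 \<le> sGamma2 V E \<sigma> f f x"
  proof -
    have "\<forall>f. \<forall>x\<in>V. sGamma2 V E \<sigma> f f x \<ge> invN N * (sLap V E \<sigma> f x)^2 + 0 * sGamma V E \<sigma> f f x"
      using CD unfolding CD_def .
    then have "sGamma2 V E \<sigma> f f x \<ge> invN N * (sLap V E \<sigma> f x)^2 + 0 * sGamma V E \<sigma> f f x"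
      using x(1) by blast
    then show ?thesis by simp
  qed
  have lff: "Lap V E (\<lambda>z. f z * f z) x = 2 * Gm x - 2 * lam * (f x * f x)"
  proof -
    have "Gm x = 1/2 * (Lap V E (\<lambda>z. f z * f z) x - f x * sLap V E \<sigma> f x - f x * sLap V E \<sigma> f x)"
      unfolding Gm_def sGamma_def by simp
    then show ?thesis using sl lff_aux by metis
  qed
  have lF: "Lap V E F x \<le> 0" using lap_max[OF G S xmax] .
  have "Lap V E F x = Lap V E Gm x + ((1 + s) * lam) * Lap V E (\<lambda>z. f z * f z) x"
    unfolding F_def by (rule lap_add[OF G S])
  then have A: "Lap V E Gm x + (1 + s) * lam * (2 * Gm x - 2 * lam * (f x * f x)) \<le> 0"
    using lF lff by (simp only: mult.assoc)
  have B: "(1 - s^2) * (lam^2 * (f x * f x)) \<le> 1/2 * Lap V E Gm x + lam * Gm x"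
  proof -
    have B0: "invN N * (- lam * f x)^2 \<le> 1/2 * Lap V E Gm x + lam * Gm x" using cd unfolding sl g2 .
    show ?thesis using cd_aux[OF B0 s(2)] .
  qed
  have C: "(s * lam) * Gm x \<le> (s * lam) * ((1 + s) * lam * (f x * f x))"
    using key_ineq[OF A B] .
  have Gx: "Gm x \<le> (1 + s) * lam * (f x * f x)"
    using C s(1) lam by (simp add: mult_le_cancel_left_pos)
  have "\<bar>f x\<bar> * \<bar>f x\<bar> \<le> M * M" using Mb x(1) by (intro mult_mono) auto
  then have "f x * f x \<le> M * M" by (simp add: abs_mult_self_eq)
  then have fM: "(1 + s) * lam * (f x * f x) \<le> (1 + s) * lam * (M * M)"
    using s(1) lam by (intro mult_left_mono) auto
  have "Gm y \<le> F y" unfolding F_def using s(1) lam by simp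
  also have "\<dots> \<le> F x" using xmax y by blast
  also have "\<dots> \<le> 2 * (1 + s) * lam * M^2" unfolding F_def using Gx fM
    by (simp add: power2_eq_square algebra_simps)
  finally show ?thesis unfolding Gm_def s_def .
qed

end


lemma opp_abs: fixes c v :: real assumes "c * v \<le> 0" shows "\<bar>c\<bar> \<le> \<bar>v - c\<bar>"
proof (cases "c \<ge> 0")
  case True
  then have "c = 0 \<or> v \<le> 0" using assms by (auto simp: mult_le_0_iff)
  then show ?thesis using True by auto
next
  case False
  then have "v \<ge> 0" using assms by (auto simp: mult_le_0_iff)
  then show ?thesis using False by auto
qed

lemma sq_sum_le: fixes a b :: real shows "(\<bar>a\<bar> + \<bar>b\<bar>)^2 \<le> 2 * (a^2 + b^2)"
proof -
  have "(\<bar>a\<bar> + \<bar>b\<bar>)^2 + (\<bar>a\<bar> - \<bar>b\<bar>)^2 = 2 * (\<bar>a\<bar> * \<bar>a\<bar> + \<bar>b\<bar> * \<bar>b\<bar>)"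
    by (simp add: power2_eq_square algebra_simps)
  also have "\<dots> = 2 * (a^2 + b^2)" by (simp add: abs_mult_self_eq power2_eq_square)
  finally show ?thesis by (smt (verit) zero_le_power2)
qed

lemma bnd_sq:
  fixes B :: real assumes B: "0 \<le> B"
  shows "(real (L div 2) * sqrt (2 * B) + real (L mod 2) * sqrt B)^2 \<le> real L * real ((L + 1) div 2) * B"
proof -
  define m where "m = L div 2"
  define t where "t = sqrt B"
  have t: "t * t = B" "0 \<le> t" using B t_def by auto
  have s2: "sqrt (2 * B) = sqrt 2 * t" by (simp add: t_def real_sqrt_mult)
  have r2: "sqrt 2 * sqrt 2 = 2" by simp
  have r2le: "sqrt 2 \<le> 3/2"
  proof -
    have "sqrt 2 \<le> sqrt ((3/2)^2)" by (intro real_sqrt_le_mono) (simp add: power2_eq_square)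
    then show ?thesis by simp
  qed
  show ?thesis
  proof (cases "even L")
    case True
    then have L: "L = 2 * m" "L mod 2 = 0" "(L + 1) div 2 = m" using m_def by auto
    have "(real (L div 2) * sqrt (2 * B) + real (L mod 2) * sqrt B)^2 = real m * real m * (sqrt 2 * sqrt 2) * (t * t)"
      unfolding L(2) s2 m_def[symmetric] by (simp add: power2_eq_square algebra_simps)
    also have "\<dots> = real L * real ((L + 1) div 2) * B" unfolding r2 t(1) L(3) by (simp add: L(1))
    finally show ?thesis by simp
  next
    case False
    then have L: "L = 2 * m + 1" "L mod 2 = 1" "(L + 1) div 2 = m + 1" using m_def
      by (auto simp: odd_iff_mod_2_eq_one)
    have "(real (L div 2) * sqrt (2 * B) + real (L mod 2) * sqrt B)^2 =
        (real m * real m * (sqrt 2 * sqrt 2) + 2 * real m * sqrt 2 + 1) * (t * t)"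
      unfolding L(2) s2 m_def[symmetric] t_def[symmetric] by (simp add: power2_eq_square algebra_simps)
    also have "\<dots> \<le> (2 * real m * real m + 3 * real m + 1) * (t * t)"
    proof (rule mult_right_mono)
      have "2 * real m * sqrt 2 \<le> 2 * real m * (3/2)" using r2le by (intro mult_left_mono) auto
      then show "real m * real m * (sqrt 2 * sqrt 2) + 2 * real m * sqrt 2 + 1 \<le> 2 * real m * real m + 3 * real m + 1"
        unfolding r2 by simp
    qed (use t in auto)
    also have "\<dots> = real L * real ((L + 1) div 2) * B" unfolding t(1) L(3) by (simp add: L(1) algebra_simps)
    finally show ?thesis .
  qed
qed

lemma ceil_half: "real_of_int \<lceil>real n / 2\<rceil> = real ((n + 1) div 2)"
proof -
  have "\<lceil>real n / 2\<rceil> = int ((n + 1) div 2)"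
  proof (cases "even n")
    case True
    then obtain m where m: "n = 2 * m" by blast
    then have "(n + 1) div 2 = m" by simp
    then show ?thesis using m by simp
  next
    case False
    then obtain m where m: "n = 2 * m + 1" using oddE by blast
    then have e: "(n + 1) div 2 = m + 1" by simp
    show ?thesis unfolding e by (rule ceiling_unique) (simp_all add: m)
  qed
  then show ?thesis by simp
qed



context
  fixes V :: "'a set" and E :: "'a \<Rightarrow> 'a \<Rightarrow> bool" and \<sigma> :: "'a \<Rightarrow> 'a \<Rightarrow> real"
  assumes G: "simple_graph V E" and S: "signature E \<sigma>"
begin

lemma lam_nonneg:
  assumes eig: "\<forall>x\<in>V. - sLap V E \<sigma> f x = lam * f x" and x0: "x0 \<in> V"
    and mx: "\<forall>y\<in>V. \<bar>f y\<bar> \<le> \<bar>f x0\<bar>"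
  shows "0 \<le> lam * (f x0 * f x0)"
proof -
  have t: "f x0 * (\<sigma> x0 y * f y - f x0) \<le> 0" if y: "y \<in> nbrs V E x0" for y
  proof -
    have yV: "y \<in> V" "E x0 y" using y nbrs_sub[OF G S] in_nbrs[OF G S] by auto
    have "f x0 * (\<sigma> x0 y * f y) \<le> \<bar>f x0 * (\<sigma> x0 y * f y)\<bar>" by simp
    also have "\<dots> = \<bar>f x0\<bar> * \<bar>f y\<bar>" using sig_pm[OF G S yV(2)] by (auto simp: abs_mult)
    also have "\<dots> \<le> \<bar>f x0\<bar> * \<bar>f x0\<bar>" using mx yV by (intro mult_left_mono) auto
    also have "\<dots> = f x0 * f x0" by (simp add: abs_mult_self_eq)
    finally show ?thesis by (simp add: algebra_simps)
  qed
  have "f x0 * (\<Sum>y\<in>nbrs V E x0. \<sigma> x0 y * f y - f x0) = (\<Sum>y\<in>nbrs V E x0. f x0 * (\<sigma> x0 y * f y - f x0))"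
    by (rule sum_distrib_left)
  also have "\<dots> \<le> 0" using t by (intro sum_nonpos) auto
  finally have X: "f x0 * (\<Sum>y\<in>nbrs V E x0. \<sigma> x0 y * f y - f x0) \<le> 0" .
  have "1 / real (deg V E x0) * (f x0 * (\<Sum>y\<in>nbrs V E x0. \<sigma> x0 y * f y - f x0)) \<le> 0"
    by (rule mult_nonneg_nonpos[OF _ X]) simp
  then have "f x0 * sLap V E \<sigma> f x0 \<le> 0" unfolding sLap_def by (simp add: algebra_simps)
  moreover have "sLap V E \<sigma> f x0 = - lam * f x0" using eig x0 by force
  ultimately show ?thesis by (simp add: algebra_simps)
qed

lemma walk_bound:
  assumes B: "\<forall>y\<in>V. (\<Sum>z\<in>nbrs V E y. (\<sigma> y z * f z - f y)^2) \<le> B"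
  shows "walk E p \<Longrightarrow> nobt p \<Longrightarrow> set p \<subseteq> V \<Longrightarrow>
    \<bar>f (hd p) - wsign \<sigma> p * f (last p)\<bar> \<le>
      real ((length p - 1) div 2) * sqrt (2 * B) + real ((length p - 1) mod 2) * sqrt B"
proof (induction p rule: twostep.induct)
  case (1 x y z xs)
  have exy: "E x y" and eyz: "E y z" and wz: "walk E (z # xs)" using 1(2) by auto
  have xz: "x \<noteq> z" using 1(3) by simp
  have nz: "nobt (z # xs)" using 1(3) nobt_tl by (metis nobt_tl)
  have sz: "set (z # xs) \<subseteq> V" using 1(4) by auto
  have yV: "y \<in> V" using 1(4) by auto
  have IH: "\<bar>f z - wsign \<sigma> (z # xs) * f (last (z # xs))\<bar> \<le>
      real ((length (z # xs) - 1) div 2) * sqrt (2 * B) + real ((length (z # xs) - 1) mod 2) * sqrt B"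
    using 1(1)[OF wz nz sz] by simp
  define a where "a = \<sigma> y x * f x - f y"
  define b where "b = \<sigma> y z * f z - f y"
  have eyx: "E y x" using Esym[OF G S exy] .
  have xN: "x \<in> nbrs V E y" "z \<in> nbrs V E y" using in_nbrs[OF G S] eyx eyz by auto
  have "a^2 + b^2 = (\<Sum>t\<in>{x, z}. (\<sigma> y t * f t - f y)^2)" using xz a_def b_def by simp
  also have "\<dots> \<le> (\<Sum>t\<in>nbrs V E y. (\<sigma> y t * f t - f y)^2)"
    using xN by (intro sum_mono2 fin_nbrs[OF G S]) auto
  also have "\<dots> \<le> B" using B yV by blast
  finally have ab: "a^2 + b^2 \<le> B" .
  have "2 * (a^2 + b^2) \<le> 2 * B" using ab by simp
  then have "(\<bar>a\<bar> + \<bar>b\<bar>)^2 \<le> 2 * B" using sq_sum_le[of a b] by (rule_tac order_trans) auto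
  then have ab2: "\<bar>a\<bar> + \<bar>b\<bar> \<le> sqrt (2 * B)" by (rule real_le_rsqrt)
  have sxy: "\<sigma> x y = 1 \<or> \<sigma> x y = -1" "\<sigma> y x = \<sigma> x y" using sig_pm[OF G S exy] sig_sym[OF G S exy] by auto
  have syz: "\<sigma> y z = 1 \<or> \<sigma> y z = -1" using sig_pm[OF G S eyz] by auto
  define W where "W = wsign \<sigma> (z # xs)"
  define l where "l = f (last (z # xs))"
  have hd: "f (hd (x # y # z # xs)) - wsign \<sigma> (x # y # z # xs) * f (last (x # y # z # xs))
     = (f x - \<sigma> x y * f y) + \<sigma> x y * (f y - \<sigma> y z * f z) + \<sigma> x y * \<sigma> y z * (f z - W * l)"
    unfolding W_def l_def by (simp add: algebra_simps)
  have e1: "\<bar>f x - \<sigma> x y * f y\<bar> = \<bar>a\<bar>" unfolding a_def using sxy by auto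
  have e2: "\<bar>\<sigma> x y * (f y - \<sigma> y z * f z)\<bar> = \<bar>b\<bar>" unfolding b_def using sxy syz by auto
  have e3: "\<bar>\<sigma> x y * \<sigma> y z * (f z - W * l)\<bar> = \<bar>f z - W * l\<bar>" using sxy syz by auto
  have "\<bar>f (hd (x # y # z # xs)) - wsign \<sigma> (x # y # z # xs) * f (last (x # y # z # xs))\<bar>
      \<le> \<bar>a\<bar> + \<bar>b\<bar> + \<bar>f z - W * l\<bar>"
    unfolding hd using e1 e2 e3 abs_triangle_ineq by (smt (verit))
  also have "\<dots> \<le> sqrt (2 * B) + (real ((length (z # xs) - 1) div 2) * sqrt (2 * B)
        + real ((length (z # xs) - 1) mod 2) * sqrt B)"
    using ab2 IH unfolding W_def l_def by linarith
  also have "\<dots> = real ((length (x # y # z # xs) - 1) div 2) * sqrt (2 * B)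
        + real ((length (x # y # z # xs) - 1) mod 2) * sqrt B"
  proof -
    have "(length (x # y # z # xs) - 1) div 2 = Suc ((length (z # xs) - 1) div 2)" by simp
    moreover have "(length (x # y # z # xs) - 1) mod 2 = (length (z # xs) - 1) mod 2" by simp
    ultimately show ?thesis by (simp add: algebra_simps)
  qed
  finally show ?case .
next
  case "2_1" then show ?case by simp
next
  case ("2_2" v) then show ?case by simp
next
  case ("2_3" x y)
  have exy: "E x y" using "2_3"(1) by simp
  have eyx: "E y x" using Esym[OF G S exy] .
  have yV: "y \<in> V" using "2_3"(3) by auto
  have sxy: "\<sigma> x y = 1 \<or> \<sigma> x y = -1" "\<sigma> y x = \<sigma> x y" using sig_pm[OF G S exy] sig_sym[OF G S exy] by auto
  have "(\<sigma> y x * f x - f y)^2 \<le> (\<Sum>t\<in>nbrs V E y. (\<sigma> y t * f t - f y)^2)"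
    using in_nbrs[OF G S] eyx by (intro member_le_sum fin_nbrs[OF G S]) auto
  also have "\<dots> \<le> B" using B yV by blast
  finally have "\<bar>\<sigma> y x * f x - f y\<bar> \<le> sqrt B" by (intro real_le_rsqrt) simp
  moreover have "\<bar>f x - \<sigma> x y * f y\<bar> = \<bar>\<sigma> y x * f x - f y\<bar>" using sxy by auto
  ultimately show ?case by simp
qed

end


context
  fixes V :: "'a set" and E :: "'a \<Rightarrow> 'a \<Rightarrow> bool" and \<sigma> :: "'a \<Rightarrow> 'a \<Rightarrow> real"
  assumes G: "simple_graph V E" and S: "signature E \<sigma>"
begin

lemma exists_walk:
  assumes conn: "connected_graph V E"
    and eig: "\<forall>x\<in>V. - sLap V E \<sigma> f x = lam * f x" and lam: "lam > 0"
    and x0: "x0 \<in> V" and fx0: "f x0 \<noteq> 0"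
  shows "\<exists>p. walk E p \<and> nobt p \<and> last p = x0 \<and> hd p \<in> V \<and> length p \<le> diameter V E + 2
           \<and> f x0 * (wsign \<sigma> p * f (hd p)) \<le> 0"
proof (rule ccontr)
  assume "\<not> ?thesis"
  then have H: "\<And>p. walk E p \<Longrightarrow> nobt p \<Longrightarrow> last p = x0 \<Longrightarrow> hd p \<in> V \<Longrightarrow> length p \<le> diameter V E + 2
      \<Longrightarrow> f x0 * (wsign \<sigma> p * f (hd p)) > 0" by force
  define Q where "Q y = (SOME q. walk E q \<and> hd q = y \<and> last q = x0 \<and> length q = Suc (gdist E y x0))" for y
  have Q: "walk E (Q y) \<and> hd (Q y) = y \<and> last (Q y) = x0 \<and> length (Q y) = Suc (gdist E y x0)" if "y \<in> V" for y
    unfolding Q_def by (rule someI_ex) (rule gdist_ex[OF conn that x0])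
  have Qn: "Q y \<noteq> []" if "y \<in> V" for y using Q[OF that] walk_nonempty by blast
  have Qnobt: "nobt (Q y)" if y: "y \<in> V" for y
  proof (rule ccontr)
    assume "\<not> nobt (Q y)"
    then obtain q where q: "walk E q" "hd q = hd (Q y)" "last q = last (Q y)" "length q < length (Q y)"
      using shorten Q[OF y] by blast
    have "gdist E y x0 \<le> length q - 1" using gdist_le[OF q(1)] q Q[OF y] by simp
    moreover have "q \<noteq> []" using walk_nonempty q(1) by blast
    ultimately show False using q(4) Q[OF y] by (cases q) auto
  qed
  have Qlen: "gdist E y x0 \<le> diameter V E" if "y \<in> V" for y using diam_ge[OF finV[OF G S] that x0] .
  define \<tau> where "\<tau> y = wsign \<sigma> (Q y)" for y
  have pos: "f x0 * (\<tau> y * f y) > 0" if y: "y \<in> V" for y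
    unfolding \<tau>_def using H[of "Q y"] Q[OF y] Qnobt[OF y] Qlen[OF y] y by force
  have tpm: "\<tau> y = 1 \<or> \<tau> y = -1" if y: "y \<in> V" for y
    unfolding \<tau>_def using wsign_pm[OF G S] Q[OF y] by blast
  have ext: "\<tau> z = \<sigma> z y * \<tau> y" if e: "E z y" and nb: "nobt (z # Q y)" for y z
  proof -
    have yz: "y \<in> V" "z \<in> V" using EV[OF G S e] by auto
    have w: "walk E (z # Q y)" using walk_Cons[OF Qn[OF yz(1)]] Q[OF yz(1)] e by simp
    have l: "last (z # Q y) = x0" using Q[OF yz(1)] Qn[OF yz(1)] by simp
    have len: "length (z # Q y) \<le> diameter V E + 2" using Q[OF yz(1)] Qlen[OF yz(1)] by simp
    have ws: "wsign \<sigma> (z # Q y) = \<sigma> z y * \<tau> y"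
      unfolding \<tau>_def using wsign_Cons[OF Qn[OF yz(1)]] Q[OF yz(1)] by simp
    have p1: "f x0 * (\<sigma> z y * \<tau> y * f z) > 0" using H[OF w nb l _ len] yz ws by simp
    have p2: "f x0 * (\<tau> z * f z) > 0" using pos[OF yz(2)] .
    have "\<sigma> z y = 1 \<or> \<sigma> z y = -1" using sig_pm[OF G S e] .
    then show ?thesis using tpm[OF yz(1)] tpm[OF yz(2)] p1 p2
      by (auto simp: algebra_simps)
  qed
  have edge: "\<tau> z = \<sigma> y z * \<tau> y" if e: "E y z" for y z
  proof (cases "nobt (z # Q y)")
    case True
    then show ?thesis using ext[OF Esym[OF G S e]] sig_sym[OF G S e] by simp
  next
    case False
    have yz: "y \<in> V" "z \<in> V" using EV[OF G S e] by auto
    obtain r where r: "Q y = y # z # r"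
    proof (cases "Q y")
      case Nil then show ?thesis using Qn[OF yz(1)] by simp
    next
      case (Cons a l)
      then have a: "a = y" using Q[OF yz(1)] by simp
      show ?thesis
      proof (cases l)
        case Nil then show ?thesis using False Cons by simp
      next
        case (Cons b r')
        then have "b = z" using False \<open>Q y = a # l\<close> Qnobt[OF yz(1)] by auto
        then show ?thesis using that \<open>Q y = a # l\<close> Cons a by simp
      qed
    qed
    have "walk E (z # r)" using Q[OF yz(1)] r by simp
    moreover have "last (z # r) = x0" using Q[OF yz(1)] r by simp
    ultimately have g1: "gdist E z x0 \<le> length (z # r) - 1" using gdist_le by (metis list.sel(1))
    have g1': "gdist E z x0 + 1 \<le> gdist E y x0" using g1 Q[OF yz(1)] r by simp
    have nb: "nobt (y # Q z)"
    proof (rule ccontr)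
      assume nn: "\<not> nobt (y # Q z)"
      obtain r' where r': "Q z = z # y # r'"
      proof (cases "Q z")
        case Nil then show ?thesis using Qn[OF yz(2)] by simp
      next
        case (Cons a l)
        then have a: "a = z" using Q[OF yz(2)] by simp
        show ?thesis
        proof (cases l)
          case Nil then show ?thesis using nn Cons by simp
        next
          case (Cons b r'')
          then have "b = y" using nn \<open>Q z = a # l\<close> Qnobt[OF yz(2)] by auto
          then show ?thesis using that \<open>Q z = a # l\<close> Cons a by simp
        qed
      qed
      have "walk E (y # r')" using Q[OF yz(2)] r' by simp
      moreover have "last (y # r') = x0" using Q[OF yz(2)] r' by simp
      ultimately have "gdist E y x0 \<le> length (y # r') - 1" using gdist_le by (metis list.sel(1))
      then have "gdist E y x0 + 1 \<le> gdist E z x0" using Q[OF yz(2)] r' by simp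
      then show False using g1' by simp
    qed
    have "\<tau> y = \<sigma> y z * \<tau> z" using ext[OF e nb] .
    then have "\<sigma> y z * \<tau> y = \<sigma> y z * \<sigma> y z * \<tau> z" by simp
    then show ?thesis using sig_sq[OF G S e] by simp
  qed
  define k where "k y = f x0 * (\<tau> y * f y)" for y
  have lapk: "Lap V E k y = - lam * k y" if y: "y \<in> V" for y
  proof -
    have "(\<Sum>z\<in>nbrs V E y. 1 * k z - k y) = (\<Sum>z\<in>nbrs V E y. (f x0 * \<tau> y) * (\<sigma> y z * f z - f y))"
    proof (rule sum.cong)
      fix z assume "z \<in> nbrs V E y"
      then have "E y z" using in_nbrs[OF G S] by blast
      then show "1 * k z - k y = (f x0 * \<tau> y) * (\<sigma> y z * f z - f y)"
        unfolding k_def using edge by (simp add: algebra_simps)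
    qed simp
    also have "\<dots> = (f x0 * \<tau> y) * (\<Sum>z\<in>nbrs V E y. \<sigma> y z * f z - f y)"
      by (rule sum_distrib_left[symmetric])
    finally have "Lap V E k y = (f x0 * \<tau> y) * sLap V E \<sigma> f y"
      unfolding Lap_def sLap_def by (simp add: algebra_simps)
    also have "\<dots> = (f x0 * \<tau> y) * (- lam * f y)"
    proof -
      have "- sLap V E \<sigma> f y = lam * f y" using eig y by blast
      then have "sLap V E \<sigma> f y = - lam * f y" by simp
      then show ?thesis by simp
    qed
    finally show ?thesis unfolding k_def by (simp add: algebra_simps)
  qed
  have fin: "finite (k ` V)" using finV[OF G S] by simp
  have ne: "k ` V \<noteq> {}" using x0 by blast
  obtain y where y: "y \<in> V" "k y = Min (k ` V)" using Min_in[OF fin ne] by auto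
  have "\<forall>z\<in>V. k y \<le> k z" using y Min_le[OF fin] by simp
  then have "Lap V E k y \<ge> 0" by (rule lap_min[OF G S])
  then have "- lam * k y \<ge> 0" using lapk[OF y(1)] by simp
  moreover have "k y > 0" using pos[OF y(1)] unfolding k_def .
  ultimately show False using lam by (simp add: mult_pos_pos) (smt (verit) mult_pos_pos)
qed

end


theorem corollary3p9:
  fixes V :: "'a set" and E :: "'a \<Rightarrow> 'a \<Rightarrow> bool" and \<sigma> :: "'a \<Rightarrow> 'a \<Rightarrow> real"
    and N :: ereal and lam :: real
  assumes "simple_graph V E" and "connected_graph V E" and "signature E \<sigma>"
    and "1 < N" and "CD V E \<sigma> 0 N"
    and "eigenvalue V E \<sigma> lam" and "lam \<noteq> 0"
  shows "lam \<ge> 1 / (4 * (1 + sqrtN N)) *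
           (1 / (real (max_deg V E) * real (diameter V E + 1)
                 * real_of_int \<lceil>real (diameter V E + 1) / 2\<rceil>))"
proof -
  note G = assms(1) and S = assms(3)
  obtain f where f: "\<exists>x\<in>V. f x \<noteq> 0" and eig: "\<forall>x\<in>V. - sLap V E \<sigma> f x = lam * f x"
    using assms(6) unfolding eigenvalue_def by blast
  have finV: "finite V" using finV[OF G S] .
  define M where "M = Max ((\<lambda>y. \<bar>f y\<bar>) ` V)"
  have fin: "finite ((\<lambda>y. \<bar>f y\<bar>) ` V)" using finV by simp
  have ne: "(\<lambda>y. \<bar>f y\<bar>) ` V \<noteq> {}" using f by blast
  obtain x0 where x0: "x0 \<in> V" "\<bar>f x0\<bar> = M" using Max_in[OF fin ne] unfolding M_def by auto
  have Mb: "\<forall>y\<in>V. \<bar>f y\<bar> \<le> M" unfolding M_def using Max_ge[OF fin] by simp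
  have Mpos: "M > 0"
  proof -
    obtain x where "x \<in> V" "f x \<noteq> 0" using f by blast
    then show ?thesis using Mb by force
  qed
  have fx0: "f x0 \<noteq> 0" using x0 Mpos by auto
  have "0 \<le> lam * (f x0 * f x0)" using lam_nonneg[OF G S eig x0(1)] Mb x0(2) by simp
  moreover have "f x0 * f x0 > 0" using fx0 by (auto simp: zero_less_mult_iff linorder_neq_iff)
  ultimately have "lam \<ge> 0" by (simp add: zero_le_mult_iff)
  then have lam: "lam > 0" using assms(7) by simp
  define s where "s = sqrtN N"
  have s: "0 < s" using sqrtN_facts[OF assms(4)] s_def by simp
  define d where "d = max_deg V E"
  have degle: "deg V E y \<le> d" if "y \<in> V" for y
    unfolding d_def max_deg_def using that finV by (intro Max_ge) auto
  define B where "B = 4 * real d * (1 + s) * lam * M^2"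
  have B0: "0 \<le> B" unfolding B_def using s lam by simp
  have Bv: "\<forall>y\<in>V. (\<Sum>z\<in>nbrs V E y. (\<sigma> y z * f z - f y)^2) \<le> B"
  proof
    fix y assume y: "y \<in> V"
    have g: "sGamma V E \<sigma> f f y \<le> 2 * (1 + s) * lam * M^2"
      using grad_bound[OF G S assms(5) assms(4) eig lam Mb y] s_def by simp
    have "(\<Sum>z\<in>nbrs V E y. (\<sigma> y z * f z - f y)^2) = 2 * real (deg V E y) * sGamma V E \<sigma> f f y"
      by (rule sum_sq[OF G S])
    also have "\<dots> \<le> (2 * real d) * (2 * (1 + s) * lam * M^2)"
      using degle[OF y] g gamma_nonneg[OF G S] by (intro mult_mono) auto
    also have "\<dots> = B" unfolding B_def by (simp add: algebra_simps)
    finally show "(\<Sum>z\<in>nbrs V E y. (\<sigma> y z * f z - f y)^2) \<le> B" .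
  qed
  obtain p where p: "walk E p" "nobt p" "last p = x0" "hd p \<in> V" "length p \<le> diameter V E + 2"
    "f x0 * (wsign \<sigma> p * f (hd p)) \<le> 0"
    using exists_walk[OF G S assms(2) eig lam x0(1) fx0] by blast
  have sp: "set p \<subseteq> V" using walk_set[OF G S p(1) p(4)] .
  define L where "L = length p - 1"
  have L: "L \<le> diameter V E + 1" using p(5) L_def by simp
  have wb: "\<bar>f (hd p) - wsign \<sigma> p * f x0\<bar> \<le> real (L div 2) * sqrt (2 * B) + real (L mod 2) * sqrt B"
    using walk_bound[OF G S Bv p(1) p(2) sp] p(3) L_def by simp
  have "M \<le> \<bar>f (hd p) - wsign \<sigma> p * f x0\<bar>"
  proof -
    have "wsign \<sigma> p = 1 \<or> wsign \<sigma> p = -1" using wsign_pm[OF G S p(1)] .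
    then show ?thesis
    proof
      assume w: "wsign \<sigma> p = 1"
      have "\<bar>f x0\<bar> \<le> \<bar>f (hd p) - f x0\<bar>" using p(6) w by (intro opp_abs) simp
      then show ?thesis using w x0(2) by simp
    next
      assume w: "wsign \<sigma> p = -1"
      have "\<bar>f x0\<bar> \<le> \<bar>- f (hd p) - f x0\<bar>" using p(6) w by (intro opp_abs) simp
      then show ?thesis using w x0(2) by (simp add: abs_minus_commute)
    qed
  qed
  then have Mle: "M \<le> real (L div 2) * sqrt (2 * B) + real (L mod 2) * sqrt B" using wb by linarith
  have "M^2 \<le> (real (L div 2) * sqrt (2 * B) + real (L mod 2) * sqrt B)^2"
    using Mle Mpos by (intro power_mono) auto
  also have "\<dots> \<le> real L * real ((L + 1) div 2) * B" using bnd_sq[OF B0] .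
  also have "\<dots> \<le> real (diameter V E + 1) * real ((diameter V E + 1 + 1) div 2) * B"
  proof (rule mult_right_mono[OF _ B0])
    have "L * ((L + 1) div 2) \<le> (diameter V E + 1) * ((diameter V E + 1 + 1) div 2)"
      using L by (intro mult_le_mono div_le_mono) auto
    then show "real L * real ((L + 1) div 2) \<le> real (diameter V E + 1) * real ((diameter V E + 1 + 1) div 2)"
      by (metis of_nat_le_iff of_nat_mult)
  qed
  finally have M2: "M^2 \<le> real (diameter V E + 1) * real ((diameter V E + 1 + 1) div 2) * B" .
  define P where "P = 4 * (1 + s) * (real d * real (diameter V E + 1) * real ((diameter V E + 1 + 1) div 2))"
  have "M^2 * 1 \<le> M^2 * (P * lam)" using M2 unfolding B_def P_def by (simp add: algebra_simps)
  then have P1: "1 \<le> P * lam" using Mpos by (simp add: mult_le_cancel_left_pos)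
  have Ppos: "P > 0"
  proof (rule ccontr)
    assume "\<not> P > 0"
    then have "P * lam \<le> 0" using lam by (simp add: mult_nonpos_nonneg)
    then show False using P1 by simp
  qed
  have "1 / P \<le> lam" using P1 Ppos by (simp add: divide_le_eq algebra_simps)
  moreover have "1 / (4 * (1 + sqrtN N)) * (1 / (real (max_deg V E) * real (diameter V E + 1)
                 * real_of_int \<lceil>real (diameter V E + 1) / 2\<rceil>)) = 1 / P"
    unfolding ceil_half P_def s_def d_def by simp
  ultimately show ?thesis by simp
qed


end
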